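(* Let $K$ be a metrizable, locally connected, compact Hausdorff space. Then for every pairwise disjoint sequence $(f_n)_{n\in\mathbb{N}}$ in $C_1(K)$, the extension $K((f_n)_{n\in\mathbb{N}})$ is a strong extension.
   Context: All spaces are Hausdorff. For a compact space $K$, $C_1(K)$ denotes the set of continuous functions $K\to[0,1]$; $f,g$ are disjoint if $f\cdot g=0$. For a real function $f$ on $K$, $supp(f)$ is the closure of $\{x\in K: f(x)\neq 0\}$. For a pairwise disjoint sequence $(f_n)_{n\in\mathbb{N}}$ in $C_1(K)$, let $D((f_n)_{n\in\mathbb{N}})$ be the union of all open sets $U\subseteq K$ such that $\{n: U\cap supp(f_n)\neq\emptyset\}$ is finite. The extension of $K$ by $(f_n)_{n\in\mathbb{N}}$, denoted $K((f_n)_{n\in\mathbb{N}})$, is the closure in $K\times[0,1]$ of the graph of the function $\sum_{n\in\mathbb{N}} f_n$ restricted to $D((f_n)_{n\in\mathbb{N}})$. The extension is called strong if it contains the graph of $\sum_{n\in\mathbb{N}} f_n$ on all of $K$. A space is locally connected if it has a basis of connected open sets. *)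

theory Defs
  imports "HOL-Analysis.Analysis"
begin

text \<open>$C_1(K)$: continuous functions $K \to [0,1]$ (K is the whole carrier type).\<close>
definition C1 :: "('a::topological_space \<Rightarrow> real) set" where
  "C1 = {f. continuous_on UNIV f \<and> (\<forall>x. 0 \<le> f x \<and> f x \<le> 1)}"

definition pairwise_disjoint_seq :: "(nat \<Rightarrow> 'a \<Rightarrow> real) \<Rightarrow> bool" where
  "pairwise_disjoint_seq f \<longleftrightarrow> (\<forall>m n. m \<noteq> n \<longrightarrow> (\<forall>x. f m x * f n x = 0))"

definition supp :: "('a::topological_space \<Rightarrow> real) \<Rightarrow> 'a set" where
  "supp f = closure {x. f x \<noteq> 0}"

definition Dset :: "(nat \<Rightarrow> 'a::topological_space \<Rightarrow> real) \<Rightarrow> 'a set" where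
  "Dset f = \<Union>{U. open U \<and> finite {n. U \<inter> supp (f n) \<noteq> {}}}"

definition sumf :: "(nat \<Rightarrow> 'a \<Rightarrow> real) \<Rightarrow> 'a \<Rightarrow> real" where
  "sumf f x = (\<Sum>n. f n x)"

text \<open>$K((f_n))$: closure in $K \times [0,1]$ of the graph of $\sum f_n$ on $D((f_n))$.
  Since $K \times [0,1]$ is closed in $K \times \mathbb{R}$ and the graph lies in it,
  the closure may be taken in $K \times \mathbb{R}$.\<close>
definition extension :: "(nat \<Rightarrow> 'a::topological_space \<Rightarrow> real) \<Rightarrow> ('a \<times> real) set" where
  "extension f = closure ((\<lambda>x. (x, sumf f x)) ` Dset f)"

definition strong_extension :: "(nat \<Rightarrow> 'a::topological_space \<Rightarrow> real) \<Rightarrow> bool" where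
  "strong_extension f \<longleftrightarrow> (\<lambda>x. (x, sumf f x)) ` UNIV \<subseteq> extension f"

end

theory Submission
  imports Defs
begin

lemma pos_in_D:
  assumes C: "\<And>n. f n \<in> C1" and P: "pairwise_disjoint_seq f" and pos: "f m z > 0"
  shows "z \<in> Dset f"
proof -
  let ?U = "{w. f m w > 0}"
  have cont: "continuous_on UNIV (f m)" using C[of m] by (simp add: C1_def)
  have oU: "open ?U"
    using open_Collect_less[OF continuous_on_const cont] by simp
  have "{n. ?U \<inter> supp (f n) \<noteq> {}} \<subseteq> {m}"
  proof
    fix n assume n: "n \<in> {n. ?U \<inter> supp (f n) \<noteq> {}}"
    show "n \<in> {m}"
    proof (rule ccontr)
      assume "n \<notin> {m}"
      hence "n \<noteq> m" by simp
      hence "\<forall>w. f m w * f n w = 0" using P unfolding pairwise_disjoint_seq_def by metis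
      hence "?U \<inter> {x. f n x \<noteq> 0} = {}" by (auto simp: mult_eq_0_iff) (metis less_irrefl)
      hence "?U \<inter> supp (f n) = {}" unfolding supp_def using open_Int_closure_eq_empty[OF oU] by blast
      thus False using n by simp
    qed
  qed
  hence "finite {n. ?U \<inter> supp (f n) \<noteq> {}}" using finite_subset by blast
  thus ?thesis unfolding Dset_def using oU pos by blast
qed

lemma sum_single_val:
  assumes "\<And>k. k \<noteq> n \<Longrightarrow> f k z = 0"
  shows "sumf f z = f n z"
proof -
  have "(\<lambda>k. f k z) = (\<lambda>k. if k = n then f k z else 0)" using assms by auto
  thus ?thesis unfolding sumf_def using sums_single[of n "\<lambda>k. f k z"] sums_unique by metis
qed

theorem theorem3p1:
  fixes f :: "nat \<Rightarrow> 'a::t2_space \<Rightarrow> real"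
  assumes "compact (UNIV :: 'a set)"
    and "metrizable_space (euclidean :: 'a topology)"
    and LC: "locally_connected_space (euclidean :: 'a topology)"
    and C: "\<And>n. f n \<in> C1"
    and P: "pairwise_disjoint_seq f"
  shows "strong_extension f"
  unfolding strong_extension_def
proof (rule subsetI)
  fix p assume "p \<in> range (\<lambda>x. (x, sumf f x))"
  then obtain x where px: "p = (x, sumf f x)" by blast
  let ?G = "(\<lambda>x. (x, sumf f x)) ` Dset f"
  show "p \<in> extension f"
  proof (cases "x \<in> Dset f")
    case True
    show ?thesis unfolding extension_def px by (rule closure_subset[THEN subsetD]) (use True in blast)
  next
    case False
    have nn: "0 \<le> f n w" for n w using C[of n] by (simp add: C1_def)
    have z0: "f n x = 0" for n
      using pos_in_D[OF C P, of n x] False nn[of n x] by linarith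
    have "sumf f x = 0" using sum_single_val[of 0 f x] z0 by simp
    have "(x, 0) \<in> closure ?G"
      unfolding closure_iff_nhds_not_empty
    proof (intro allI impI)
      fix A S assume SA: "S \<subseteq> A" and oS: "open S" and xS: "(x, 0::real) \<in> S"
      obtain V B where oV: "open V" and oB: "open B" and xVB: "(x,0) \<in> V \<times> B" and VB: "V \<times> B \<subseteq> S"
        using open_prod_elim[OF oS xS] by metis
      obtain e where e: "e > 0" "ball 0 e \<subseteq> B" using oB xVB open_contains_ball by force
      obtain U where oU: "open U" and cU: "connected U" and xU: "x \<in> U" and UV: "U \<subseteq> V"
        using LC xVB oV unfolding locally_connected_space by (metis SigmaD1 connectedin_iff_connected open_openin subtopology_UNIV)
      have "\<not> finite {n. U \<inter> supp (f n) \<noteq> {}}"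
        using False oU xU unfolding Dset_def by blast
      then obtain n where "U \<inter> supp (f n) \<noteq> {}" by (metis (mono_tags) Collect_empty_eq finite.emptyI)
      hence "U \<inter> {w. f n w \<noteq> 0} \<noteq> {}" unfolding supp_def using open_Int_closure_eq_empty[OF oU] by blast
      then obtain y where yU: "y \<in> U" and fy: "f n y \<noteq> 0" by blast
      have fyp: "f n y > 0" using fy nn[of n y] by linarith
      have contU: "continuous_on U (f n)" using C[of n] continuous_on_subset by (auto simp: C1_def)
      have conn: "connected (f n ` U)" using connected_continuous_image[OF contU cU] .
      define t where "t = min e (f n y) / 2"
      have t: "t > 0" "t < e" "t \<le> f n y" using e fyp by (auto simp: t_def)
      have "{f n x .. f n y} \<subseteq> f n ` U"
        using connected_contains_Icc[OF conn] xU yU by blast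
      hence "t \<in> f n ` U" using t z0[of n] by auto
      then obtain z where zU: "z \<in> U" and fz: "f n z = t" by blast
      have zD: "z \<in> Dset f" using pos_in_D[OF C P, of n z] fz t by simp
      have others: "f k z = 0" if "k \<noteq> n" for k
      proof -
        have "f n z * f k z = 0" using P that unfolding pairwise_disjoint_seq_def by metis
        thus ?thesis using fz t by simp
      qed
      have sz: "sumf f z = t" using sum_single_val[of n f z, OF others] fz by simp
      have "t \<in> B" using e t by (auto simp: dist_real_def)
      hence "(z, sumf f z) \<in> S" using VB zU UV sz by blast
      moreover have "(z, sumf f z) \<in> ?G" using zD by blast
      ultimately show "?G \<inter> A \<noteq> {}" using SA by blast
    qed
    thus ?thesis unfolding extension_def px using \<open>sumf f x = 0\<close> by simp
  qed
qed

end
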